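(* Let $f(X)=X^n+a_{n-1}X^{n-1}+\cdots+a_0$ be a monic polynomial with all coefficients $a_j\in\mathbb{C}_{\mathcal{P}}$. Then there is a procedure which, for any natural number $m$, computes in time bounded by a polynomial in $\log m$ all coefficients of an approximation polynomial $\tilde f(X)=X^n+\tilde a_{n-1}X^{n-1}+\cdots+\tilde a_0$ of $f$ such that the roots $\rho_1,\dots,\rho_n$ of $f$ and $\tilde\rho_1,\dots,\tilde\rho_n$ of $\tilde f$ (with multiplicity), suitably arranged, satisfy $|\rho_i-\tilde\rho_i|\le\frac1m$ for all $i$.
   Context: A function $f:\mathbb{N}\to\mathbb{Z}$ is polynomial time computable if there is a deterministic Turing machine which, on input $n$ (written in binary, so of size about $\log n$), halts with output $f(n)$ within a number of steps bounded by a polynomial in the input size. A complex number $z$ is a polynomial time computable number if there exist two polynomial time computable functions $f,g:\mathbb{N}\to\mathbb{Z}$ (called defining functions of $z$) such that $\left|z-\frac{f(n)+g(n)i}{n}\right|\le \frac{1}{n}$ for every natural number $n>1$; $\mathbb{C}_{\mathcal{P}}$ is the set of such numbers. A monic polynomial $\tilde f$ is an approximation polynomial of $f$ if each coefficient $\tilde a_j$ is obtained by evaluating the defining functions of the corresponding coefficient $a_j$ of $f$, i.e. $\tilde a_j=\frac{f_j(k)+g_j(k)i}{k}$ for some $k>1$, where $f_j,g_j$ are defining functions of $a_j$. *)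

theory Defs
  imports "HOL-Analysis.Analysis" "HOL-Computational_Algebra.Polynomial"
begin

datatype move = Lm | Rm | Nm

definition move_val :: "move \<Rightarrow> int" where
  "move_val mv = (case mv of Lm \<Rightarrow> -1 | Rm \<Rightarrow> 1 | Nm \<Rightarrow> 0)"

text \<open>A machine is (number of states Q, number of tape symbols S, transition function).
  States are 0..<Q, start state 0, halting state 1.  Tape symbols are 0..<S, where
  0 = blank, 1 = binary digit 0, 2 = binary digit 1, 3 = minus sign.\<close>
type_synonym tm = "nat \<times> nat \<times> (nat \<Rightarrow> nat \<Rightarrow> nat \<times> nat \<times> move)"

type_synonym config = "nat \<times> (int \<Rightarrow> nat) \<times> int"

definition wf_tm :: "tm \<Rightarrow> bool" where
  "wf_tm M = (case M of (Q, S, \<delta>) \<Rightarrow> 2 \<le> Q \<and> 4 \<le> S \<and>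
     (\<forall>q<Q. \<forall>s<S. fst (\<delta> q s) < Q \<and> fst (snd (\<delta> q s)) < S))"

definition tm_step :: "tm \<Rightarrow> config \<Rightarrow> config" where
  "tm_step M c = (case M of (Q, S, \<delta>) \<Rightarrow> (case c of (q, tp, h) \<Rightarrow>
     if q = 1 then (q, tp, h)
     else (case \<delta> q (tp h) of (q', s', mv) \<Rightarrow> (q', tp(h := s'), h + move_val mv))))"

definition tm_run :: "tm \<Rightarrow> nat \<Rightarrow> config \<Rightarrow> config" where
  "tm_run M t c = (tm_step M ^^ t) c"

fun bin_digits :: "nat \<Rightarrow> nat list" where
  "bin_digits n = (if n < 2 then [n] else bin_digits (n div 2) @ [n mod 2])"

definition input_size :: "nat \<Rightarrow> nat" where
  "input_size n = length (bin_digits n)"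

definition nat_word :: "nat \<Rightarrow> nat list" where
  "nat_word n = map Suc (bin_digits n)"

definition int_word :: "int \<Rightarrow> nat list" where
  "int_word z = (if z < 0 then [3] else []) @ nat_word (nat \<bar>z\<bar>)"

definition tm_init :: "nat \<Rightarrow> config" where
  "tm_init n = (0, (\<lambda>i. if 0 \<le> i \<and> i < int (length (nat_word n)) then nat_word n ! nat i else 0), 0)"

definition out_word :: "(int \<Rightarrow> nat) \<Rightarrow> int \<Rightarrow> nat list" where
  "out_word tp h = map (\<lambda>i. tp (h + int i)) [0..<(LEAST k. tp (h + int k) = 0)]"

definition tm_computes_in :: "tm \<Rightarrow> (nat \<Rightarrow> int) \<Rightarrow> nat \<Rightarrow> nat \<Rightarrow> bool" where
  "tm_computes_in M f n t = (case tm_run M t (tm_init n) of (q, tp, h) \<Rightarrow>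
      q = 1 \<and> out_word tp h = int_word (f n))"

definition poly_time_computable :: "(nat \<Rightarrow> int) \<Rightarrow> bool" where
  "poly_time_computable f = (\<exists>M c k. wf_tm M \<and>
     (\<forall>n. \<exists>t. t \<le> c * (input_size n + 1) ^ k \<and> tm_computes_in M f n t))"

definition defining_functions :: "complex \<Rightarrow> (nat \<Rightarrow> int) \<Rightarrow> (nat \<Rightarrow> int) \<Rightarrow> bool" where
  "defining_functions z f g = (poly_time_computable f \<and> poly_time_computable g \<and>
     (\<forall>n>1. cmod (z - (of_int (f n) + of_int (g n) * \<i>) / of_nat n) \<le> 1 / real n))"

definition CP :: "complex set" where
  "CP = {z. \<exists>f g. defining_functions z f g}"

definition approx_poly :: "nat \<Rightarrow> (nat \<Rightarrow> nat \<Rightarrow> int) \<Rightarrow> (nat \<Rightarrow> nat \<Rightarrow> int) \<Rightarrow> nat \<Rightarrow> complex poly" where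
  "approx_poly n fs gs k = monom 1 n +
     (\<Sum>j<n. monom ((of_int (fs j k) + of_int (gs j k) * \<i>) / of_nat k) j)"

definition roots_poly :: "complex list \<Rightarrow> complex poly" where
  "roots_poly rs = prod_list (map (\<lambda>r. [:-r, 1:]) rs)"

end

theory Submission
  imports Defs "HOL-Computational_Algebra.Fundamental_Theorem_Algebra"
begin


lemma roots_poly_Nil[simp]: "roots_poly [] = 1"
  by (simp add: roots_poly_def)

lemma roots_poly_Cons: "roots_poly (x # xs) = [:-x, 1:] * roots_poly xs"
  by (simp add: roots_poly_def)

lemma roots_poly_monic_degree:
  "lead_coeff (roots_poly xs) = 1 \<and> degree (roots_poly xs) = length xs"
proof (induction xs)
  case Nil then show ?case by simp
next
  case (Cons x xs)
  have nz: "roots_poly xs \<noteq> 0" using Cons by auto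
  have "degree ([:-x, 1:] * roots_poly xs) = 1 + length xs"
    using Cons nz by (subst degree_mult_eq) auto
  moreover have "lead_coeff ([:-x, 1:] * roots_poly xs) = 1"
  proof -
    have lc: "lead_coeff [:-x, 1:] = (1::complex)" by simp
    show ?thesis using Cons lc by (metis lead_coeff_mult mult_1)
  qed
  ultimately show ?case by (simp only: roots_poly_Cons) simp
qed

lemma poly_roots_poly: "poly (roots_poly xs) z = prod_list (map (\<lambda>r. z - r) xs)"
  by (induction xs) (simp_all only: roots_poly_Cons poly_mult, auto simp: algebra_simps)

lemma roots_poly_remove1:
  "x \<in> set xs \<Longrightarrow> roots_poly xs = [:-x, 1:] * roots_poly (remove1 x xs)"
proof (induction xs)
  case (Cons y ys)
  show ?case
  proof (cases "y = x")
    case False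
    then have "x \<in> set ys" using Cons by simp
    have "roots_poly (y # ys) = [:-y, 1:] * ([:-x, 1:] * roots_poly (remove1 x ys))"
      using Cons.IH[OF \<open>x \<in> set ys\<close>] by (simp only: roots_poly_Cons)
    also have "\<dots> = [:-x, 1:] * ([:-y, 1:] * roots_poly (remove1 x ys))"
      by (rule mult.left_commute)
    also have "\<dots> = [:-x, 1:] * roots_poly (remove1 x (y # ys))"
    proof -
      have "remove1 x (y # ys) = y # remove1 x ys" using False by simp
      then show ?thesis by (simp only: roots_poly_Cons)
    qed
    finally show ?thesis .
  qed (simp add: roots_poly_Cons)
qed simp

lemma complex_factor:
  fixes g :: "complex poly"
  assumes "lead_coeff g = 1" "degree g = n"
  shows "\<exists>rs. length rs = n \<and> g = roots_poly rs"
  using assms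
proof (induction n arbitrary: g)
  case 0
  then obtain a where "g = [:a:]" using degree_eq_zeroE by blast
  then have "g = 1" using 0 by (simp add: one_pCons)
  then show ?case by (intro exI[of _ "[]"]) simp
next
  case (Suc n)
  have "\<not> (\<exists>a l. a \<noteq> 0 \<and> l = 0 \<and> g = pCons a l)"
    using Suc.prems by auto
  then obtain z where "poly g z = 0" using fundamental_theorem_of_algebra_alt by blast
  then obtain q where q: "g = [:-z, 1:] * q" using poly_eq_0_iff_dvd by (metis dvdE)
  have qnz: "q \<noteq> 0" using q Suc.prems by auto
  have "degree ([:-z, 1:] * q) = degree [:-z, 1:] + degree q"
    using qnz by (intro degree_mult_eq) auto
  then have "degree g = 1 + degree q" using q by simp
  then have dq: "degree q = n" using Suc.prems by simp
  have "lead_coeff g = lead_coeff [:-z, 1:] * lead_coeff q" unfolding q by (rule lead_coeff_mult)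
  then have "lead_coeff q = 1" using Suc.prems by simp
  then obtain rs where "length rs = n" "q = roots_poly rs" using Suc.IH dq by blast
  then show ?case using q by (intro exI[of _ "z # rs"]) (simp add: roots_poly_Cons)
qed

lemma div_bound_aux:
  fixes h :: "complex poly"
  assumes h0: "\<forall>j\<ge>n. coeff h j = 0"
    and hc: "\<forall>i. cmod (coeff ([:-s, 1:] * h) i) \<le> e"
    and sS: "cmod s \<le> S" and S1: "1 \<le> S" and e0: "0 \<le> e"
  shows "\<forall>j. n - j = d \<longrightarrow> cmod (coeff h j) \<le> e * real d * S ^ d"
proof (induction d)
  case 0
  then show ?case using h0 by auto
next
  case (Suc d)
  show ?case
  proof (intro allI impI)
    fix j assume jd: "n - j = Suc d"
    then have IH: "cmod (coeff h (Suc j)) \<le> e * real d * S ^ d" using Suc.IH by auto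
    have eq: "coeff ([:-s, 1:] * h) (Suc j) = coeff h j - s * coeff h (Suc j)"
      by simp
    then have "coeff h j = coeff ([:-s, 1:] * h) (Suc j) + s * coeff h (Suc j)" by simp
    then have "cmod (coeff h j) \<le> cmod (coeff ([:-s, 1:] * h) (Suc j)) + cmod s * cmod (coeff h (Suc j))"
      by (metis norm_mult norm_triangle_ineq)
    also have "\<dots> \<le> e + S * (e * real d * S ^ d)"
    proof -
      have "cmod (coeff ([:-s, 1:] * h) (Suc j)) \<le> e" using hc by blast
      moreover have "cmod s * cmod (coeff h (Suc j)) \<le> S * (e * real d * S ^ d)"
        using sS IH S1 by (intro mult_mono) auto
      ultimately show ?thesis by (rule add_mono)
    qed
    also have "\<dots> \<le> e * real (Suc d) * S ^ Suc d"
    proof -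
      have "1 \<le> S ^ Suc d" using S1 by (rule one_le_power)
      then have "e * 1 \<le> e * S ^ Suc d" using e0 by (rule mult_left_mono)
      then have "e \<le> e * S ^ Suc d" by simp
      then show ?thesis by (simp add: algebra_simps)
    qed
    finally show "cmod (coeff h j) \<le> e * real (Suc d) * S ^ Suc d" .
  qed
qed

lemma div_bound:
  fixes h :: "complex poly"
  assumes h0: "\<forall>j\<ge>n. coeff h j = 0"
    and hc: "\<forall>i. cmod (coeff ([:-s, 1:] * h) i) \<le> e"
    and sS: "cmod s \<le> S" and S1: "1 \<le> S" and e0: "0 \<le> e"
  shows "cmod (coeff h j) \<le> e * real n * S ^ n"
proof -
  have "cmod (coeff h j) \<le> e * real (n - j) * S ^ (n - j)"
    using div_bound_aux[OF assms, of "n - j"] by auto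
  also have "\<dots> \<le> e * real n * S ^ n"
    using e0 S1 by (intro mult_mono power_increasing) auto
  finally show ?thesis .
qed

lemma prod_lower:
  fixes xs :: "complex list"
  assumes "0 \<le> t" "\<forall>x\<in>set xs. t < cmod (z - x)" "xs \<noteq> []"
  shows "t ^ length xs < cmod (prod_list (map (\<lambda>r. z - r) xs))"
  using assms
proof (induction xs)
  case Nil then show ?case by simp
next
  case (Cons x xs)
  show ?case
  proof (cases "xs = []")
    case True then show ?thesis using Cons by simp
  next
    case False
    then have "t ^ length xs < cmod (prod_list (map (\<lambda>r. z - r) xs))" using Cons by simp
    moreover have "t < cmod (z - x)" using Cons by simp
    ultimately have "t * t ^ length xs < cmod (z - x) * cmod (prod_list (map (\<lambda>r. z - r) xs))"
      using Cons.prems(1) by (intro mult_strict_mono) auto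
    then show ?thesis by (simp add: norm_mult)
  qed
qed

lemma poly_bound:
  fixes q :: "complex poly"
  assumes "degree q \<le> N" "\<forall>i. cmod (coeff q i) \<le> d"
  shows "cmod (poly q z) \<le> d * (\<Sum>i\<le>N. cmod z ^ i)"
proof -
  have "cmod (poly q z) = cmod (\<Sum>i\<le>degree q. coeff q i * z ^ i)" by (simp add: poly_altdef)
  also have "\<dots> \<le> (\<Sum>i\<le>degree q. cmod (coeff q i * z ^ i))" by (rule norm_sum)
  also have "\<dots> \<le> (\<Sum>i\<le>degree q. d * cmod z ^ i)"
    using assms(2) by (intro sum_mono) (simp add: norm_mult norm_power mult_right_mono)
  also have "\<dots> \<le> (\<Sum>i\<le>N. d * cmod z ^ i)"
  proof (rule sum_mono2)
    show "finite {..N}" by simp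
    show "{..degree q} \<subseteq> {..N}" using assms(1) by auto
    have "0 \<le> d" using assms(2) norm_ge_zero order_trans by blast
    then show "0 \<le> d * cmod z ^ b" if "b \<in> {..N} - {..degree q}" for b by simp
  qed
  finally show ?thesis by (simp add: sum_distrib_left)
qed

lemma approx_roots:
  fixes rs :: "complex list"
  shows "\<exists>c>0. \<exists>E::nat. \<forall>g \<eta>. lead_coeff g = 1 \<longrightarrow> degree g = length rs \<longrightarrow> 0 < \<eta> \<longrightarrow> \<eta> \<le> 1 \<longrightarrow>
     (\<forall>j<length rs. cmod (coeff g j - coeff (roots_poly rs) j) \<le> c * \<eta> ^ E) \<longrightarrow>
     (\<exists>rs1 rs'. length rs1 = length rs \<and> length rs' = length rs \<and> roots_poly rs1 = roots_poly rs \<and>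
        g = roots_poly rs' \<and> (\<forall>i<length rs. cmod (rs1 ! i - rs' ! i) \<le> \<eta>))"
proof (induction rs)
  case Nil
  show ?case
  proof (rule exI[where x="1::real"], rule conjI, simp, rule exI[where x="0::nat"], intro allI impI)
    fix g :: "complex poly" and \<eta> :: real
    assume "lead_coeff g = 1" "degree g = length ([]::complex list)"
    then obtain xs where "length xs = 0" "g = roots_poly xs" using complex_factor[of g 0] by auto
    then have "g = roots_poly []" by simp
    then show "\<exists>rs1 rs'. length rs1 = length ([]::complex list) \<and> length rs' = length ([]::complex list) \<and>
       roots_poly rs1 = roots_poly [] \<and> g = roots_poly rs' \<and> (\<forall>i<length ([]::complex list). cmod (rs1 ! i - rs' ! i) \<le> \<eta>)"
      by (intro exI[where x="[]::complex list"]) simp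
  qed
next
  case (Cons \<rho> rs0)
  obtain c0 E0 where c0: "c0 > 0" and IH: "\<forall>g \<eta>. lead_coeff g = 1 \<longrightarrow> degree g = length rs0 \<longrightarrow> 0 < \<eta> \<longrightarrow> \<eta> \<le> 1 \<longrightarrow>
     (\<forall>j<length rs0. cmod (coeff g j - coeff (roots_poly rs0) j) \<le> c0 * \<eta> ^ E0) \<longrightarrow>
     (\<exists>rs1 rs'. length rs1 = length rs0 \<and> length rs' = length rs0 \<and> roots_poly rs1 = roots_poly rs0 \<and>
        g = roots_poly rs' \<and> (\<forall>i<length rs0. cmod (rs1 ! i - rs' ! i) \<le> \<eta>))"
    using Cons.IH by blast
  define n where "n = length rs0"
  define f0 where "f0 = roots_poly rs0"
  define f where "f = roots_poly (\<rho> # rs0)"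
  have f_eq: "f = [:-\<rho>, 1:] * f0" unfolding f_def f0_def by (rule roots_poly_Cons)
  have f0_md: "lead_coeff f0 = 1" "degree f0 = n"
    using roots_poly_monic_degree[of rs0] unfolding f0_def n_def by blast+
  have f_md: "lead_coeff f = 1" "degree f = Suc n"
    using roots_poly_monic_degree[of "\<rho> # rs0"] unfolding f_def n_def by auto
  define F where "F = (\<Sum>j\<le>n. cmod (coeff f0 j))"
  define S where "S = cmod \<rho> + 1"
  define D where "D = (\<Sum>i\<le>Suc n. cmod \<rho> ^ i)"
  define A where "A = real n * S ^ n + 1"
  define \<alpha> where "\<alpha> = min 1 (c0 / (2 * (F + 1) * A))"
  define c where "c = min (\<alpha> ^ Suc n / (D + 1)) (c0 / (2 * A))"
  define E where "E = (E0 + 1) * Suc n"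
  have F0: "F \<ge> 0" unfolding F_def by (intro sum_nonneg) auto
  have S1: "S \<ge> 1" unfolding S_def by simp
  have D0: "D \<ge> 0" unfolding D_def by (intro sum_nonneg) auto
  have A1: "A \<ge> 1" unfolding A_def using S1 by simp
  have \<alpha>0: "\<alpha> > 0" unfolding \<alpha>_def using c0 F0 A1 by simp
  have \<alpha>1: "\<alpha> \<le> 1" unfolding \<alpha>_def by simp
  have c_pos: "c > 0" unfolding c_def using \<alpha>0 D0 c0 A1 by simp
  have coeff_f0_le: "cmod (coeff f0 i) \<le> F" for i
  proof (cases "i \<le> n")
    case True
    then show ?thesis unfolding F_def
      by (intro member_le_sum) auto
  next
    case False
    then have "coeff f0 i = 0" using f0_md by (intro coeff_eq_0) simp
    then show ?thesis using F0 by simp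
  qed
  show ?case
  proof (rule exI[where x=c], rule conjI, rule c_pos, rule exI[where x=E], intro allI impI)
    fix g :: "complex poly" and \<eta> :: real
    assume g_lc: "lead_coeff g = 1" and g_deg: "degree g = length (\<rho> # rs0)"
      and \<eta>0: "0 < \<eta>" and \<eta>1: "\<eta> \<le> 1"
      and close: "\<forall>j<length (\<rho> # rs0). cmod (coeff g j - coeff (roots_poly (\<rho> # rs0)) j) \<le> c * \<eta> ^ E"
    define \<delta> where "\<delta> = c * \<eta> ^ E"
    define t where "t = \<alpha> * \<eta> ^ (E0 + 1)"
    have g_deg': "degree g = Suc n" using g_deg n_def by simp
    have \<delta>0: "\<delta> \<ge> 0" unfolding \<delta>_def using c_pos \<eta>0 by simp
    have t0: "t > 0" unfolding t_def using \<alpha>0 \<eta>0 by simp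
    have pE: "\<eta> ^ E \<le> \<eta> ^ E0" unfolding E_def using \<eta>0 \<eta>1 by (intro power_decreasing) auto
    have pE1: "\<eta> ^ (E0 + 1) \<le> \<eta> ^ E0" using \<eta>0 \<eta>1 by (intro power_decreasing) auto
    have pE2: "\<eta> ^ (E0 + 1) \<le> \<eta>" using \<eta>0 \<eta>1 power_decreasing[of 1 "E0+1" \<eta>] by simp
    have "\<alpha> * \<eta> ^ (E0 + 1) \<le> 1 * \<eta> ^ (E0 + 1)"
      using \<alpha>1 \<eta>0 by (intro mult_right_mono) auto
    then have t_le: "t \<le> \<eta>" unfolding t_def using pE2 by simp
    have tn: "t ^ Suc n = \<alpha> ^ Suc n * \<eta> ^ E"
      unfolding t_def E_def by (simp only: power_mult_distrib power_mult)
    have \<delta>D: "\<delta> * (D + 1) \<le> t ^ Suc n"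
    proof -
      have "c \<le> \<alpha> ^ Suc n / (D + 1)" unfolding c_def by (rule min.cobounded1)
      then have "c * (D + 1) \<le> \<alpha> ^ Suc n" using D0 by (simp add: pos_le_divide_eq)
      then have "c * (D + 1) * \<eta> ^ E \<le> \<alpha> ^ Suc n * \<eta> ^ E" using \<eta>0 by (intro mult_right_mono) auto
      then show ?thesis unfolding \<delta>_def tn by (simp add: algebra_simps)
    qed
    have diff_all: "cmod (coeff (g - f) j) \<le> \<delta>" for j
    proof (cases "j < Suc n")
      case True
      then show ?thesis using close unfolding \<delta>_def f_def n_def by simp
    next
      case False
      show ?thesis
      proof (cases "j = Suc n")
        case True
        then show ?thesis using g_lc g_deg' f_md \<delta>0 by simp
      next
        case False
        then have "j > Suc n" using \<open>\<not> j < Suc n\<close> by simp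
        then have "coeff g j = 0" "coeff f j = 0" using g_deg' f_md by (auto intro: coeff_eq_0)
        then show ?thesis using \<delta>0 by simp
      qed
    qed
    have deg_gf: "degree (g - f) \<le> Suc n" using g_deg' f_md
      by (intro degree_diff_le) auto
    have "poly f \<rho> = 0" unfolding f_eq by simp
    then have "poly g \<rho> = poly (g - f) \<rho>" by simp
    then have gval: "cmod (poly g \<rho>) \<le> \<delta> * D"
      unfolding D_def using poly_bound[OF deg_gf, of \<delta> \<rho>] diff_all by simp
    obtain xs where xs: "length xs = Suc n" "g = roots_poly xs" using complex_factor g_lc g_deg' by blast
    have "\<exists>\<sigma>\<in>set xs. cmod (\<rho> - \<sigma>) \<le> t"
    proof (rule ccontr)
      assume "\<not> ?thesis"
      then have "\<forall>x\<in>set xs. t < cmod (\<rho> - x)" by auto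
      then have "t ^ length xs < cmod (prod_list (map (\<lambda>r. \<rho> - r) xs))"
        using t0 xs by (intro prod_lower) auto
      also have "\<dots> = cmod (poly g \<rho>)" using xs poly_roots_poly by simp
      also have "\<dots> \<le> \<delta> * D" by (rule gval)
      also have "\<dots> \<le> \<delta> * (D + 1)" using \<delta>0 by (simp add: mult_left_mono)
      also have "\<dots> \<le> t ^ Suc n" by (rule \<delta>D)
      finally show False using xs by simp
    qed
    then obtain \<sigma> where \<sigma>: "\<sigma> \<in> set xs" "cmod (\<rho> - \<sigma>) \<le> t" by blast
    define g1 where "g1 = roots_poly (remove1 \<sigma> xs)"
    have g_eq: "g = [:-\<sigma>, 1:] * g1" unfolding g1_def using xs \<sigma> roots_poly_remove1 by simp
    have g1_md: "lead_coeff g1 = 1" "degree g1 = n" unfolding g1_def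
      using roots_poly_monic_degree[of "remove1 \<sigma> xs"] xs \<sigma> by (auto simp: length_remove1)
    define h where "h = g1 - f0"
    have h0: "\<forall>j\<ge>n. coeff h j = 0"
    proof (intro allI impI)
      fix j assume "n \<le> j"
      then show "coeff h j = 0" using g1_md f0_md
      proof (cases "j = n")
        case False
        then have "j > n" using \<open>n \<le> j\<close> by simp
        then have "coeff g1 j = 0" "coeff f0 j = 0" using g1_md f0_md by (auto intro: coeff_eq_0)
        then show ?thesis unfolding h_def by simp
      qed (simp add: h_def)
    qed
    have h_eq: "[:-\<sigma>, 1:] * h = (g - f) - smult (\<rho> - \<sigma>) f0"
    proof -
      have X: "[:-\<sigma>, 1:] = [:-\<rho>, 1:] + [:\<rho> - \<sigma>:]" by simp
      have Xf: "[:-\<sigma>, 1:] * f0 = [:-\<rho>, 1:] * f0 + smult (\<rho> - \<sigma>) f0"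
        by (subst X, subst distrib_right) simp
      show ?thesis unfolding h_def g_eq f_eq right_diff_distrib Xf by simp
    qed
    have hc: "\<forall>i. cmod (coeff ([:-\<sigma>, 1:] * h) i) \<le> \<delta> + t * F"
    proof
      fix i
      have "cmod (coeff ([:-\<sigma>, 1:] * h) i) = cmod (coeff (g - f) i - (\<rho> - \<sigma>) * coeff f0 i)"
        unfolding h_eq by simp
      also have "\<dots> \<le> cmod (coeff (g - f) i) + cmod (\<rho> - \<sigma>) * cmod (coeff f0 i)"
        using norm_triangle_ineq4[of "coeff (g - f) i" "(\<rho> - \<sigma>) * coeff f0 i"] by (simp add: norm_mult)
      also have "\<dots> \<le> \<delta> + t * F"
        using diff_all \<sigma>(2) coeff_f0_le t0 by (intro add_mono mult_mono) auto
      finally show "cmod (coeff ([:-\<sigma>, 1:] * h) i) \<le> \<delta> + t * F" .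
    qed
    have \<sigma>S: "cmod \<sigma> \<le> S"
    proof -
      have "cmod \<sigma> \<le> cmod \<rho> + cmod (\<rho> - \<sigma>)" using norm_triangle_ineq4[of \<rho> "\<rho> - \<sigma>"] by simp
      then show ?thesis unfolding S_def using \<sigma>(2) t_le \<eta>1 by simp
    qed
    have hbound: "cmod (coeff h j) \<le> c0 * \<eta> ^ E0" for j
    proof -
      have "cmod (coeff h j) \<le> (\<delta> + t * F) * real n * S ^ n"
        using div_bound[OF h0 hc \<sigma>S S1] \<delta>0 t0 F0 by simp
      also have "\<dots> \<le> (\<delta> + t * F) * A"
      proof -
        have "0 \<le> \<delta> + t * F" using \<delta>0 t0 F0 by simp
        then have "(\<delta> + t * F) * (real n * S ^ n) \<le> (\<delta> + t * F) * A"
          unfolding A_def by (intro mult_left_mono) auto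
        then show ?thesis by (simp add: mult.assoc)
      qed
      also have "\<dots> = \<delta> * A + t * F * A" by (simp add: algebra_simps)
      also have "\<dots> \<le> c0 / 2 * \<eta> ^ E0 + c0 / 2 * \<eta> ^ E0"
      proof (rule add_mono)
        have "\<delta> * A \<le> (c0 / (2 * A)) * \<eta> ^ E0 * A"
          unfolding \<delta>_def c_def using pE A1 \<eta>0 c0
          by (intro mult_right_mono mult_mono) auto
        then show "\<delta> * A \<le> c0 / 2 * \<eta> ^ E0" using A1 by simp
        have "\<alpha> \<le> c0 / (2 * (F + 1) * A)" unfolding \<alpha>_def by (rule min.cobounded2)
        then have a1: "\<alpha> * (2 * (F + 1) * A) \<le> c0" using F0 A1 by (simp add: pos_le_divide_eq)
        have "\<alpha> * F * A \<le> \<alpha> * (F + 1) * A" using \<alpha>0 A1 by (intro mult_right_mono mult_left_mono) auto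
        then have a2: "\<alpha> * F * A \<le> c0 / 2" using a1 by (simp add: algebra_simps)
        have "t * F * A = (\<alpha> * F * A) * \<eta> ^ (E0 + 1)" unfolding t_def by (simp add: ac_simps)
        also have "\<dots> \<le> (c0 / 2) * \<eta> ^ (E0 + 1)" using a2 \<eta>0 by (intro mult_right_mono) auto
        also have "\<dots> \<le> c0 / 2 * \<eta> ^ E0" using pE1 c0 by (intro mult_left_mono) auto
        finally show "t * F * A \<le> c0 / 2 * \<eta> ^ E0" .
      qed
      finally show ?thesis by simp
    qed
    have "\<forall>j<length rs0. cmod (coeff g1 j - coeff (roots_poly rs0) j) \<le> c0 * \<eta> ^ E0"
      using hbound unfolding h_def f0_def by simp
    then obtain rs1 rs' where R: "length rs1 = length rs0" "length rs' = length rs0"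
      "roots_poly rs1 = roots_poly rs0" "g1 = roots_poly rs'"
      "\<forall>i<length rs0. cmod (rs1 ! i - rs' ! i) \<le> \<eta>"
      using IH g1_md \<eta>0 \<eta>1 n_def by blast
    show "\<exists>rs1 rs'. length rs1 = length (\<rho> # rs0) \<and> length rs' = length (\<rho> # rs0) \<and>
       roots_poly rs1 = roots_poly (\<rho> # rs0) \<and> g = roots_poly rs' \<and>
       (\<forall>i<length (\<rho> # rs0). cmod (rs1 ! i - rs' ! i) \<le> \<eta>)"
    proof (rule exI[of _ "\<rho> # rs1"], rule exI[of _ "\<sigma> # rs'"], intro conjI allI impI)
      show "roots_poly (\<rho> # rs1) = roots_poly (\<rho> # rs0)" using R by (simp only: roots_poly_Cons)
      show "g = roots_poly (\<sigma> # rs')" using R g_eq by (simp only: roots_poly_Cons)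
      fix i assume "i < length (\<rho> # rs0)"
      then show "cmod ((\<rho> # rs1) ! i - (\<sigma> # rs') ! i) \<le> \<eta>"
        using R(5) \<sigma>(2) t_le by (cases i) auto
    qed (use R in auto)
  qed
qed



lemma move_val_simps[simp]: "move_val Lm = -1" "move_val Rm = 1" "move_val Nm = 0"
  by (simp_all add: move_val_def)

lemma run_0[simp]: "tm_run M 0 c = c"
  by (simp add: tm_run_def)

lemma run_Suc: "tm_run M (Suc t) c = tm_run M t (tm_step M c)"
  unfolding tm_run_def by (simp only: funpow_Suc_right comp_def)

lemma run_Suc': "tm_run M (Suc t) c = tm_step M (tm_run M t c)"
  by (simp add: tm_run_def)

lemma run_add: "tm_run M (a + b) c = tm_run M b (tm_run M a c)"
  unfolding tm_run_def by (subst add.commute) (simp only: funpow_add comp_def)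

lemma step_eq:
  assumes "q \<noteq> 1" "\<delta> q (tp h) = (q', s', mv)"
  shows "tm_step (Q, S, \<delta>) (q, tp, h) = (q', tp(h := s'), h + move_val mv)"
  using assms by (simp add: tm_step_def)

lemma walk:
  assumes "q \<noteq> 1" "\<forall>j<k. \<delta> q (tp (h + int j * d)) = (q, tp (h + int j * d), mv)" "move_val mv = d"
  shows "tm_run (Q, S, \<delta>) k (q, tp, h) = (q, tp, h + int k * d)"
  using assms(2)
proof (induction k arbitrary: h)
  case 0 then show ?case by simp
next
  case (Suc k)
  have "\<delta> q (tp h) = (q, tp h, mv)" using Suc.prems[rule_format, of 0] by simp
  then have st: "tm_step (Q, S, \<delta>) (q, tp, h) = (q, tp, h + d)"
    using step_eq[OF assms(1)] assms(3) by simp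
  have "\<forall>j<k. \<delta> q (tp (h + d + int j * d)) = (q, tp (h + d + int j * d), mv)"
  proof (intro allI impI)
    fix j assume "j < k"
    then have "\<delta> q (tp (h + int (Suc j) * d)) = (q, tp (h + int (Suc j) * d), mv)"
      using Suc.prems by blast
    moreover have "h + int (Suc j) * d = h + d + int j * d" by (simp add: algebra_simps)
    ultimately show "\<delta> q (tp (h + d + int j * d)) = (q, tp (h + d + int j * d), mv)" by (simp only:)
  qed
  then have "tm_run (Q, S, \<delta>) k (q, tp, h + d) = (q, tp, h + d + int k * d)" using Suc.IH by blast
  then show ?case using st by (simp add: run_Suc algebra_simps)
qed


declare bin_digits.simps[simp del]

lemma bin_digits_le1: "set (bin_digits n) \<subseteq> {0, 1}"
proof (induction n rule: bin_digits.induct)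
  case (1 n)
  show ?case
  proof (cases "n < 2")
    case True
    then show ?thesis by (subst bin_digits.simps) auto
  next
    case False
    then show ?thesis using 1 by (subst bin_digits.simps) auto
  qed
qed

lemma bin_digits_ne: "bin_digits n \<noteq> []"
  by (subst bin_digits.simps) auto

lemma input_size_ge1: "input_size n \<ge> 1"
  unfolding input_size_def using bin_digits_ne[of n] by (cases "bin_digits n") auto

lemma bin_digits_pow2: "bin_digits (2 ^ k) = 1 # replicate k 0"
proof (induction k)
  case 0 then show ?case by (subst bin_digits.simps) simp
next
  case (Suc k)
  have "bin_digits (2 ^ Suc k) = bin_digits (2 ^ k) @ [0]"
    by (subst bin_digits.simps) simp
  then show ?case using Suc by (simp add: replicate_append_same[symmetric])
qed

lemma input_size_pow2: "input_size (2 ^ k) = Suc k"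
  unfolding input_size_def bin_digits_pow2 by simp

lemma less_pow_input_size: "n < 2 ^ input_size n"
proof (induction n rule: bin_digits.induct)
  case (1 n)
  show ?case
  proof (cases "n < 2")
    case True
    then show ?thesis unfolding input_size_def by (subst bin_digits.simps) auto
  next
    case False
    then have "input_size n = Suc (input_size (n div 2))"
      unfolding input_size_def by (subst bin_digits.simps) simp
    moreover have "n div 2 < 2 ^ input_size (n div 2)" using 1 False by simp
    ultimately show ?thesis by simp
  qed
qed

lemma run_trans: "tm_run M a c = c' \<Longrightarrow> tm_run M b c' = c'' \<Longrightarrow> tm_run M (a + b) c = c''"
  by (simp add: run_add)

lemma run_one: "tm_step M c = c' \<Longrightarrow> tm_run M 1 c = c'"
  by (simp add: run_Suc)

lemma nat_word_sym: "i < length (nat_word m) \<Longrightarrow> nat_word m ! i = 1 \<or> nat_word m ! i = 2"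
  using bin_digits_le1[of m] unfolding nat_word_def
  by (auto dest!: nth_mem[of i "bin_digits m"])

definition rl :: "nat \<Rightarrow> nat \<times> nat \<times> move \<Rightarrow> nat \<times> nat \<times> move" where
  "rl Q x = (case x of (q', s', mv) \<Rightarrow> (if q' = 0 then Q else q', s', mv))"

definition cdelta :: "nat \<Rightarrow> nat \<Rightarrow> (nat \<Rightarrow> nat \<Rightarrow> nat \<times> nat \<times> move) \<Rightarrow> nat \<Rightarrow> nat \<Rightarrow> nat \<times> nat \<times> move" where
  "cdelta N Q \<delta> q s =
    (if q = 0 then (if s = 1 \<or> s = 2 then (0, 3, Rm) else (Q + 1, s, Lm))
     else if q = Q then rl Q (\<delta> 0 s)
     else if q < Q then rl Q (\<delta> q s)
     else if q = Q + 1 then (if s = 3 then (Q + 2, 0, Lm) else (Q + 5, s, Lm))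
     else if q = Q + 2 then (if s = 0 then (Q + 6, 0, Nm) else (Q + 2, s, Lm))
     else if q = Q + 3 then (Q + 4, s, Rm)
     else if q = Q + 4 then (if s = 0 then (Q + 1, 0, Lm) else (Q + 4, s, Rm))
     else if q = Q + 5 then (if s = 0 then (Q, 2, Nm) else (Q + 5, s, Lm))
     else if Suc q < Q + 6 + N then (Suc q, 1, Lm) else (Q + 3, 1, Lm))"

definition T :: "int \<Rightarrow> int \<Rightarrow> int \<Rightarrow> int \<Rightarrow> nat" where
  "T a b c i = (if a \<le> i \<and> i < b then 1 else if b \<le> i \<and> i < c then 3 else 0)"

definition ti :: "nat \<Rightarrow> int \<Rightarrow> nat" where
  "ti m = (\<lambda>i. if 0 \<le> i \<and> i < int (length (nat_word m)) then nat_word m ! nat i else 0)"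

definition liftc :: "nat \<Rightarrow> config \<Rightarrow> config" where
  "liftc Q c = (case c of (q, tp, h) \<Rightarrow> (if q = 0 then Q else q, tp, h))"

definition minv :: "nat \<Rightarrow> nat \<Rightarrow> config \<Rightarrow> bool" where
  "minv Q S c = (case c of (q, tp, h) \<Rightarrow> q < Q \<and> (\<forall>i. tp i < S))"

definition shiftc :: "int \<Rightarrow> config \<Rightarrow> config" where
  "shiftc d c = (case c of (q, tp, h) \<Rightarrow> (q, \<lambda>i. tp (i - d), h + d))"

lemma shift_step: "tm_step M (shiftc d c) = shiftc d (tm_step M c)"
proof -
  obtain Q S \<delta> where M: "M = (Q, S, \<delta>)" by (cases M)
  obtain q tp h where c: "c = (q, tp, h)" by (cases c)
  show ?thesis
  proof (cases "q = 1")
    case True then show ?thesis unfolding M c by (simp add: tm_step_def shiftc_def)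
  next
    case False
    obtain q' s' mv where d: "\<delta> q (tp h) = (q', s', mv)" by (cases "\<delta> q (tp h)")
    have "(\<lambda>i. tp (i - d))(h + d := s') = (\<lambda>i. (tp(h := s')) (i - d))" by (auto simp: fun_eq_iff)
    then show ?thesis unfolding M c using False d by (simp add: tm_step_def shiftc_def algebra_simps)
  qed
qed

lemma shift_run: "tm_run M t (shiftc d c) = shiftc d (tm_run M t c)"
  by (induction t) (simp_all add: run_Suc' shift_step)

lemma out_shift: "out_word (\<lambda>i. tp (i - d)) (h + d) = out_word tp h"
  unfolding out_word_def by (simp add: algebra_simps)

context
  fixes N Q S :: nat and \<delta> :: "nat \<Rightarrow> nat \<Rightarrow> nat \<times> nat \<times> move"
  assumes Q2: "2 \<le> Q" and N1: "1 \<le> N"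
begin

abbreviation "D \<equiv> cdelta N Q \<delta>"
abbreviation "MM \<equiv> (Q + 6 + N, S, cdelta N Q \<delta>)"

lemma d_conv: "s = 1 \<or> s = 2 \<Longrightarrow> D 0 s = (0, 3, Rm)" "D 0 0 = (Q + 1, 0, Lm)"
  by (auto simp: cdelta_def)
lemma d_C: "D (Q + 1) 3 = (Q + 2, 0, Lm)" "D (Q + 1) 1 = (Q + 5, 1, Lm)"
  using Q2 by (auto simp: cdelta_def)
lemma d_WL: "s \<noteq> 0 \<Longrightarrow> D (Q + 2) s = (Q + 2, s, Lm)" "D (Q + 2) 0 = (Q + 6, 0, Nm)"
  using Q2 by (auto simp: cdelta_def)
lemma d_WR1: "D (Q + 3) s = (Q + 4, s, Rm)"
  using Q2 by (auto simp: cdelta_def)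
lemma d_WR: "s \<noteq> 0 \<Longrightarrow> D (Q + 4) s = (Q + 4, s, Rm)" "D (Q + 4) 0 = (Q + 1, 0, Lm)"
  using Q2 by (auto simp: cdelta_def)
lemma d_FL: "s \<noteq> 0 \<Longrightarrow> D (Q + 5) s = (Q + 5, s, Lm)" "D (Q + 5) 0 = (Q, 2, Nm)"
  using Q2 by (auto simp: cdelta_def)
lemma d_P: "i < N \<Longrightarrow> D (Q + 6 + i) s = (if Suc i < N then (Q + 6 + Suc i, 1, Lm) else (Q + 3, 1, Lm))"
  using Q2 by (auto simp: cdelta_def)

lemma stepD: "q \<noteq> 1 \<Longrightarrow> D q (tp h) = (q', s', mv) \<Longrightarrow> tm_step MM (q, tp, h) = (q', tp(h := s'), h + move_val mv)"
  by (rule step_eq)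

lemma writes:
  "\<forall>i tp h. k = N - i \<longrightarrow> i < N \<longrightarrow>
     tm_run MM k (Q + 6 + i, tp, h) = (Q + 3, \<lambda>x. if h - int k < x \<and> x \<le> h then 1 else tp x, h - int k)"
proof (induction k)
  case 0 then show ?case by simp
next
  case (Suc k)
  show ?case
  proof (intro allI impI)
    fix i tp h assume k: "Suc k = N - i" and i: "i < N"
    show "tm_run MM (Suc k) (Q + 6 + i, tp, h) = (Q + 3, \<lambda>x. if h - int (Suc k) < x \<and> x \<le> h then 1 else tp x, h - int (Suc k))"
    proof (cases "Suc i < N")
      case True
      have st: "tm_step MM (Q + 6 + i, tp, h) = (Q + 6 + Suc i, tp(h := 1), h - 1)"
        using stepD[of "Q + 6 + i" tp h] d_P[OF i] True Q2 by simp
      have kk: "k = N - Suc i" using k by simp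
      have IH': "tm_run MM k (Q + 6 + Suc i, tp(h := 1), h - 1) =
        (Q + 3, \<lambda>x. if h - 1 - int k < x \<and> x \<le> h - 1 then 1 else (tp(h := 1)) x, h - 1 - int k)"
        using Suc.IH[rule_format, OF kk True] .
      have "tm_run MM (Suc k) (Q + 6 + i, tp, h) = tm_run MM k (Q + 6 + Suc i, tp(h := 1), h - 1)"
        by (simp only: run_Suc st)
      also have "\<dots> = (Q + 3, \<lambda>x. if h - 1 - int k < x \<and> x \<le> h - 1 then 1 else (tp(h := 1)) x, h - 1 - int k)"
        by (rule IH')
      also have "\<dots> = (Q + 3, \<lambda>x. if h - int (Suc k) < x \<and> x \<le> h then 1 else tp x, h - int (Suc k))"
        by (auto simp: fun_eq_iff)
      finally show ?thesis .
    next
      case False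
      then have k0: "k = 0" using k i by simp
      have st: "tm_step MM (Q + 6 + i, tp, h) = (Q + 3, tp(h := 1), h - 1)"
        using stepD[of "Q + 6 + i" tp h] d_P[OF i] False Q2 by simp
      have "tm_run MM (Suc k) (Q + 6 + i, tp, h) = (Q + 3, tp(h := 1), h - 1)"
        using k0 by (simp only: run_Suc st run_0)
      also have "\<dots> = (Q + 3, \<lambda>x. if h - int (Suc k) < x \<and> x \<le> h then 1 else tp x, h - int (Suc k))"
        using k0 by (auto simp: fun_eq_iff)
      finally show ?thesis .
    qed
  qed
qed

lemma conv_phase:
  fixes m :: nat
  defines "tz \<equiv> (\<lambda>i. if 0 \<le> i \<and> i < int (length (nat_word m)) then nat_word m ! nat i else 0)"
  shows "j \<le> length (nat_word m) \<Longrightarrow> tm_run MM j (0, tz, 0) = (0, \<lambda>i. if 0 \<le> i \<and> i < int j then 3 else tz i, int j)"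
proof (induction j)
  case 0 then show ?case by (simp add: fun_eq_iff)
next
  case (Suc j)
  have sym: "tz (int j) = 1 \<or> tz (int j) = 2"
    using Suc.prems nat_word_sym[of j m] unfolding tz_def by simp
  let ?tp = "\<lambda>i. if 0 \<le> i \<and> i < int j then 3 else tz i"
  have "?tp (int j) = tz (int j)" by simp
  then have "D 0 (?tp (int j)) = (0, 3, Rm)" using sym d_conv(1) by simp
  then have "tm_step MM (0, ?tp, int j) = (0, ?tp(int j := 3), int j + 1)"
    using stepD[of 0 ?tp "int j"] by simp
  moreover have "tm_run MM j (0, tz, 0) = (0, ?tp, int j)" using Suc by simp
  ultimately show ?case by (simp add: run_Suc' fun_eq_iff)
qed

lemma conv_full:
  fixes m :: nat
  defines "tz \<equiv> (\<lambda>i. if 0 \<le> i \<and> i < int (length (nat_word m)) then nat_word m ! nat i else 0)"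
  shows "tm_run MM (Suc (length (nat_word m))) (0, tz, 0) = (Q + 1, T 0 0 (int (length (nat_word m))), int (length (nat_word m)) - 1)"
proof -
  let ?L = "length (nat_word m)"
  have "tm_run MM ?L (0, tz, 0) = (0, \<lambda>i. if 0 \<le> i \<and> i < int ?L then 3 else tz i, int ?L)"
    using conv_phase[of ?L m] unfolding tz_def by simp
  also have "(\<lambda>i. if 0 \<le> i \<and> i < int ?L then 3 else tz i) = T 0 0 (int ?L)"
    unfolding T_def tz_def by (auto simp: fun_eq_iff)
  finally have r: "tm_run MM ?L (0, tz, 0) = (0, T 0 0 (int ?L), int ?L)" .
  have "T 0 0 (int ?L) (int ?L) = 0" unfolding T_def by simp
  then have "tm_step MM (0, T 0 0 (int ?L), int ?L) = (Q + 1, (T 0 0 (int ?L))(int ?L := 0), int ?L - 1)"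
    using stepD[of 0 "T 0 0 (int ?L)" "int ?L"] d_conv(2) by simp
  moreover have "(T 0 0 (int ?L))(int ?L := 0) = T 0 0 (int ?L)"
    unfolding T_def by (auto simp: fun_eq_iff)
  ultimately show ?thesis using r by (simp add: run_Suc')
qed

lemma loop_iter:
  assumes ab: "a \<le> b" and bc: "b < c"
  shows "tm_run MM (1 + nat (c - 1 - a) + 1 + N + 1 + (nat (c - 1 - a) + N) + 1) (Q + 1, T a b c, c - 1)
         = (Q + 1, T (a - int N) b (c - 1), c - 2)"
proof -
  let ?k1 = "nat (c - 1 - a)"
  have s1: "tm_run MM 1 (Q + 1, T a b c, c - 1) = (Q + 2, T a b (c - 1), c - 2)"
  proof (rule run_one)
    have "T a b c (c - 1) = 3" unfolding T_def using ab bc by auto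
    then have "tm_step MM (Q + 1, T a b c, c - 1) = (Q + 2, (T a b c)(c - 1 := 0), c - 1 - 1)"
      using stepD[of "Q + 1" "T a b c" "c - 1"] d_C(1) Q2 by simp
    moreover have "(T a b c)(c - 1 := 0) = T a b (c - 1)" unfolding T_def using ab bc by (auto simp: fun_eq_iff)
    ultimately show "tm_step MM (Q + 1, T a b c, c - 1) = (Q + 2, T a b (c - 1), c - 2)" by simp
  qed
  have s2: "tm_run MM ?k1 (Q + 2, T a b (c - 1), c - 2) = (Q + 2, T a b (c - 1), a - 1)"
  proof -
    have "tm_run MM ?k1 (Q + 2, T a b (c - 1), c - 2) = (Q + 2, T a b (c - 1), c - 2 + int ?k1 * (-1))"
    proof (rule walk)
      show "Q + 2 \<noteq> 1" by simp
      show "move_val Lm = -1" by simp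
      show "\<forall>j<?k1. D (Q + 2) (T a b (c - 1) (c - 2 + int j * - 1)) = (Q + 2, T a b (c - 1) (c - 2 + int j * - 1), Lm)"
      proof (intro allI impI)
        fix j assume "j < ?k1"
        then have "T a b (c - 1) (c - 2 + int j * - 1) \<noteq> 0" unfolding T_def using ab bc by auto
        then show "D (Q + 2) (T a b (c - 1) (c - 2 + int j * - 1)) = (Q + 2, T a b (c - 1) (c - 2 + int j * - 1), Lm)"
          by (rule d_WL(1))
      qed
    qed
    moreover have "c - 2 + int ?k1 * (-1) = a - 1" using ab bc by simp
    ultimately show ?thesis by simp
  qed
  have s3: "tm_run MM 1 (Q + 2, T a b (c - 1), a - 1) = (Q + 6, T a b (c - 1), a - 1)"
  proof (rule run_one)
    have z: "T a b (c - 1) (a - 1) = 0" unfolding T_def using ab bc by auto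
    then have "tm_step MM (Q + 2, T a b (c - 1), a - 1) = (Q + 6, (T a b (c - 1))(a - 1 := 0), a - 1)"
      using stepD[of "Q + 2" "T a b (c - 1)" "a - 1"] d_WL(2) by simp
    then show "tm_step MM (Q + 2, T a b (c - 1), a - 1) = (Q + 6, T a b (c - 1), a - 1)"
      using z by (simp add: fun_upd_idem)
  qed
  have s4: "tm_run MM N (Q + 6, T a b (c - 1), a - 1) = (Q + 3, T (a - int N) b (c - 1), a - 1 - int N)"
  proof -
    have "tm_run MM N (Q + 6 + 0, T a b (c - 1), a - 1) =
      (Q + 3, \<lambda>x. if a - 1 - int N < x \<and> x \<le> a - 1 then 1 else T a b (c - 1) x, a - 1 - int N)"
      using writes[rule_format, of N 0] N1 by simp
    moreover have "(\<lambda>x. if a - 1 - int N < x \<and> x \<le> a - 1 then 1 else T a b (c - 1) x) = T (a - int N) b (c - 1)"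
      unfolding T_def using ab bc by (auto simp: fun_eq_iff)
    ultimately show ?thesis by simp
  qed
  have s5: "tm_run MM 1 (Q + 3, T (a - int N) b (c - 1), a - 1 - int N) = (Q + 4, T (a - int N) b (c - 1), a - int N)"
  proof (rule run_one)
    show "tm_step MM (Q + 3, T (a - int N) b (c - 1), a - 1 - int N) = (Q + 4, T (a - int N) b (c - 1), a - int N)"
      using stepD[of "Q + 3" "T (a - int N) b (c - 1)" "a - 1 - int N"] d_WR1 by simp
  qed
  have s6: "tm_run MM (?k1 + N) (Q + 4, T (a - int N) b (c - 1), a - int N) = (Q + 4, T (a - int N) b (c - 1), c - 1)"
  proof -
    have "tm_run MM (?k1 + N) (Q + 4, T (a - int N) b (c - 1), a - int N) = (Q + 4, T (a - int N) b (c - 1), a - int N + int (?k1 + N) * 1)"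
    proof (rule walk)
      show "Q + 4 \<noteq> 1" by simp
      show "move_val Rm = 1" by simp
      show "\<forall>j<?k1 + N. D (Q + 4) (T (a - int N) b (c - 1) (a - int N + int j * 1)) = (Q + 4, T (a - int N) b (c - 1) (a - int N + int j * 1), Rm)"
      proof (intro allI impI)
        fix j assume "j < ?k1 + N"
        then have "T (a - int N) b (c - 1) (a - int N + int j * 1) \<noteq> 0" unfolding T_def using ab bc by auto
        then show "D (Q + 4) (T (a - int N) b (c - 1) (a - int N + int j * 1)) = (Q + 4, T (a - int N) b (c - 1) (a - int N + int j * 1), Rm)"
          by (rule d_WR(1))
      qed
    qed
    moreover have "a - int N + int (?k1 + N) * 1 = c - 1" using ab bc by simp
    ultimately show ?thesis by simp
  qed
  have s7: "tm_run MM 1 (Q + 4, T (a - int N) b (c - 1), c - 1) = (Q + 1, T (a - int N) b (c - 1), c - 2)"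
  proof (rule run_one)
    have z: "T (a - int N) b (c - 1) (c - 1) = 0" unfolding T_def using ab bc by auto
    then have "tm_step MM (Q + 4, T (a - int N) b (c - 1), c - 1) = (Q + 1, (T (a - int N) b (c - 1))(c - 1 := 0), c - 1 - 1)"
      using stepD[of "Q + 4" "T (a - int N) b (c - 1)" "c - 1"] d_WR(2) by simp
    then show "tm_step MM (Q + 4, T (a - int N) b (c - 1), c - 1) = (Q + 1, T (a - int N) b (c - 1), c - 2)"
      using z by (simp add: fun_upd_idem)
  qed
  show ?thesis
    by (rule run_trans[OF run_trans[OF run_trans[OF run_trans[OF run_trans[OF run_trans[OF s1 s2] s3] s4] s5] s6] s7])
qed

lemma loop:
  "\<forall>a. a \<le> b \<longrightarrow> nat (b + int r - a) + N * r \<le> W \<longrightarrow>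
     (\<exists>t \<le> r * (2 * W + 2 * N + 4). tm_run MM t (Q + 1, T a b (b + int r), b + int r - 1) = (Q + 1, T (a - int (N * r)) b b, b - 1))"
proof (induction r)
  case 0
  show ?case by (intro allI impI exI[of _ 0]) simp
next
  case (Suc r)
  show ?case
  proof (intro allI impI)
    fix a assume ab: "a \<le> b" and W: "nat (b + int (Suc r) - a) + N * Suc r \<le> W"
    define k1 where "k1 = nat (b + int (Suc r) - 1 - a)"
    have it: "tm_run MM (1 + k1 + 1 + N + 1 + (k1 + N) + 1) (Q + 1, T a b (b + int (Suc r)), b + int (Suc r) - 1)
         = (Q + 1, T (a - int N) b (b + int (Suc r) - 1), b + int (Suc r) - 2)"
      unfolding k1_def using loop_iter[of a b "b + int (Suc r)"] ab by simp
    have e1: "b + int (Suc r) - 1 = b + int r" "b + int (Suc r) - 2 = b + int r - 1" by simp_all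
    have ab': "a - int N \<le> b" using ab by simp
    have W': "nat (b + int r - (a - int N)) + N * r \<le> W"
    proof -
      have "nat (b + int r - (a - int N)) = nat (b + int (Suc r) - a) + N - 1" using ab N1 by simp
      then show ?thesis using W N1 by simp
    qed
    obtain t2 where t2: "t2 \<le> r * (2 * W + 2 * N + 4)"
      "tm_run MM t2 (Q + 1, T (a - int N) b (b + int r), b + int r - 1) = (Q + 1, T (a - int N - int (N * r)) b b, b - 1)"
      using Suc.IH ab' W' by blast
    have k1W: "k1 \<le> W" unfolding k1_def using W by simp
    have R0: "tm_run MM ((1 + k1 + 1 + N + 1 + (k1 + N) + 1) + t2) (Q + 1, T a b (b + int (Suc r)), b + int (Suc r) - 1)
          = (Q + 1, T (a - int N - int (N * r)) b b, b - 1)"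
      using run_trans[OF it[unfolded e1] t2(2)] by simp
    have eqA: "a - int N - int (N * r) = a - int (N * Suc r)" by (simp add: algebra_simps)
    have R: "tm_run MM ((1 + k1 + 1 + N + 1 + (k1 + N) + 1) + t2) (Q + 1, T a b (b + int (Suc r)), b + int (Suc r) - 1)
          = (Q + 1, T (a - int (N * Suc r)) b b, b - 1)"
      using R0 by (simp only: eqA)
    have le: "(1 + k1 + 1 + N + 1 + (k1 + N) + 1) + t2 \<le> Suc r * (2 * W + 2 * N + 4)"
      using t2(1) k1W by simp
    show "\<exists>t \<le> Suc r * (2 * W + 2 * N + 4). tm_run MM t (Q + 1, T a b (b + int (Suc r)), b + int (Suc r) - 1) = (Q + 1, T (a - int (N * Suc r)) b b, b - 1)"
      using R le by blast
  qed
qed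

lemma terminal:
  assumes a: "a \<le> -1"
  shows "tm_run MM (1 + nat (-1 - a) + 1) (Q + 1, T a 0 0, -1) = (Q, (T a 0 0)(a - 1 := 2), a - 1)"
proof -
  let ?k = "nat (-1 - a)"
  have s1: "tm_run MM 1 (Q + 1, T a 0 0, -1) = (Q + 5, T a 0 0, -2)"
  proof (rule run_one)
    have z: "T a 0 0 (-1) = 1" unfolding T_def using a by auto
    then have "tm_step MM (Q + 1, T a 0 0, -1) = (Q + 5, (T a 0 0)(-1 := 1), -1 - 1)"
      using stepD[of "Q + 1" "T a 0 0" "-1"] d_C(2) Q2 by simp
    then show "tm_step MM (Q + 1, T a 0 0, -1) = (Q + 5, T a 0 0, -2)"
      using z by (simp add: fun_upd_idem)
  qed
  have s2: "tm_run MM ?k (Q + 5, T a 0 0, -2) = (Q + 5, T a 0 0, a - 1)"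
  proof -
    have "tm_run MM ?k (Q + 5, T a 0 0, -2) = (Q + 5, T a 0 0, -2 + int ?k * (-1))"
    proof (rule walk)
      show "Q + 5 \<noteq> 1" by simp
      show "move_val Lm = -1" by simp
      show "\<forall>j<?k. D (Q + 5) (T a 0 0 (-2 + int j * - 1)) = (Q + 5, T a 0 0 (-2 + int j * - 1), Lm)"
      proof (intro allI impI)
        fix j assume "j < ?k"
        then have "T a 0 0 (-2 + int j * - 1) \<noteq> 0" unfolding T_def using a by auto
        then show "D (Q + 5) (T a 0 0 (-2 + int j * - 1)) = (Q + 5, T a 0 0 (-2 + int j * - 1), Lm)"
          by (rule d_FL(1))
      qed
    qed
    moreover have "-2 + int ?k * (-1) = a - 1" using a by simp
    ultimately show ?thesis by simp
  qed
  have s3: "tm_run MM 1 (Q + 5, T a 0 0, a - 1) = (Q, (T a 0 0)(a - 1 := 2), a - 1)"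
  proof (rule run_one)
    have z: "T a 0 0 (a - 1) = 0" unfolding T_def by auto
    then show "tm_step MM (Q + 5, T a 0 0, a - 1) = (Q, (T a 0 0)(a - 1 := 2), a - 1)"
      using stepD[of "Q + 5" "T a 0 0" "a - 1"] d_FL(2) by simp
  qed
  show ?thesis by (rule run_trans[OF run_trans[OF s1 s2] s3])
qed


lemma pre_phase:
  fixes m :: nat
  defines "L \<equiv> input_size m"
  shows "\<exists>t \<le> Suc L + L * (2 * (L + N * L) + 2 * N + 4) + (N * L + 1).
           tm_run MM t (tm_init m) = (Q, \<lambda>i. ti (2 ^ (N * L)) (i + int (N * L) + 1), - int (N * L) - 1)"
proof -
  have len: "length (nat_word m) = L" unfolding L_def input_size_def nat_word_def by simp
  have L1: "L \<ge> 1" unfolding L_def by (rule input_size_ge1)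
  have c1: "tm_run MM (Suc L) (tm_init m) = (Q + 1, T 0 0 (int L), int L - 1)"
    using conv_full[of m] unfolding tm_init_def len by simp
  obtain t2 where t2: "t2 \<le> L * (2 * (L + N * L) + 2 * N + 4)"
    "tm_run MM t2 (Q + 1, T 0 0 (0 + int L), 0 + int L - 1) = (Q + 1, T (0 - int (N * L)) 0 0, 0 - 1)"
    using loop[of 0 L "L + N * L"] by auto
  have t2': "tm_run MM t2 (Q + 1, T 0 0 (int L), int L - 1) = (Q + 1, T (- int (N * L)) 0 0, -1)"
    using t2(2) by simp
  have "1 * 1 \<le> N * L" using N1 L1 by (rule mult_le_mono)
  then have NL: "N * L \<ge> 1" by simp
  have a: "- int (N * L) \<le> -1" using NL by linarith
  have t3: "tm_run MM (1 + nat (-1 - (- int (N * L))) + 1) (Q + 1, T (- int (N * L)) 0 0, -1)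
        = (Q, (T (- int (N * L)) 0 0)(- int (N * L) - 1 := 2), - int (N * L) - 1)"
    by (rule terminal[OF a])
  have gen: "\<And>x::nat. x \<ge> 1 \<Longrightarrow> nat (-1 - (- int x)) = x - 1" by linarith
  have "nat (-1 - (- int (N * L))) = N * L - 1" using gen[OF NL] .
  then have n3: "1 + nat (-1 - (- int (N * L))) + 1 = N * L + 1" using NL by simp
  have tape: "(T (- int (N * L)) 0 0)(- int (N * L) - 1 := 2) = (\<lambda>i. ti (2 ^ (N * L)) (i + int (N * L) + 1))"
  proof (rule ext)
    fix i
    have nw: "nat_word (2 ^ (N * L)) = 2 # replicate (N * L) 1"
      unfolding nat_word_def bin_digits_pow2 by simp
    show "((T (- int (N * L)) 0 0)(- int (N * L) - 1 := 2)) i = ti (2 ^ (N * L)) (i + int (N * L) + 1)"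
    proof (cases "i = - int (N * L) - 1")
      case True
      have "0 < 1 + int N * int L" by (simp add: add_pos_nonneg)
      then show ?thesis using True unfolding ti_def nw by simp
    next
      case False
      show ?thesis
      proof (cases "- int (N * L) \<le> i \<and> i < 0")
        case True
        have g: "\<And>x::int. 0 \<le> x \<Longrightarrow> nat (x + 1) = Suc (nat x)" by (subst nat_add_distrib) auto
        have "0 \<le> i + int (N * L)" using True by linarith
        then have "nat (i + int (N * L) + 1) = Suc (nat (i + int (N * L)))" by (rule g)
        have "i + int (N * L) < int (N * L)" using True by linarith
        then have "nat (i + int (N * L)) < N * L" using \<open>0 \<le> i + int (N * L)\<close> by (simp only: nat_less_iff)
        then show ?thesis using True False unfolding ti_def nw T_def by simp
      next
        case F2: False
        then show ?thesis using False unfolding ti_def nw T_def by auto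
      qed
    qed
  qed
  have "tm_run MM (Suc L + t2 + (N * L + 1)) (tm_init m) = (Q, \<lambda>i. ti (2 ^ (N * L)) (i + int (N * L) + 1), - int (N * L) - 1)"
    using run_trans[OF run_trans[OF c1 t2'] t3[unfolded n3 tape]] by simp
  moreover have "Suc L + t2 + (N * L + 1) \<le> Suc L + L * (2 * (L + N * L) + 2 * N + 4) + (N * L + 1)"
    using t2(1) by simp
  ultimately show ?thesis by blast
qed

lemma sim_step:
  assumes wf: "wf_tm (Q, S, \<delta>)" and inv: "minv Q S c"
  shows "tm_step MM (liftc Q c) = liftc Q (tm_step (Q, S, \<delta>) c) \<and> minv Q S (tm_step (Q, S, \<delta>) c)"
proof -
  obtain q tp h where c: "c = (q, tp, h)" by (cases c)
  have qQ: "q < Q" and tpS: "\<forall>i. tp i < S" using inv unfolding c minv_def by auto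
  show ?thesis
  proof (cases "q = 1")
    case True
    then show ?thesis unfolding c using inv c by (simp add: tm_step_def liftc_def)
  next
    case False
    obtain q' s' mv where d: "\<delta> q (tp h) = (q', s', mv)" by (cases "\<delta> q (tp h)")
    have W: "\<forall>q<Q. \<forall>s<S. fst (\<delta> q s) < Q \<and> fst (snd (\<delta> q s)) < S"
      using wf unfolding wf_tm_def by auto
    then have "fst (\<delta> q (tp h)) < Q \<and> fst (snd (\<delta> q (tp h))) < S" using qQ tpS by blast
    then have wq: "q' < Q" "s' < S" using d by auto
    have st: "tm_step (Q, S, \<delta>) (q, tp, h) = (q', tp(h := s'), h + move_val mv)"
      using False d by (rule step_eq)
    have dr: "D (if q = 0 then Q else q) (tp h) = (if q' = 0 then Q else q', s', mv)"
      using qQ d False Q2 by (auto simp: cdelta_def rl_def)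
    have rq: "(if q = 0 then Q else q) \<noteq> 1" using False Q2 by auto
    have "tm_step MM (if q = 0 then Q else q, tp, h) = (if q' = 0 then Q else q', tp(h := s'), h + move_val mv)"
      using stepD[of "if q = 0 then Q else q" tp h, OF rq dr] .
    then show ?thesis unfolding c liftc_def minv_def using st wq tpS by auto
  qed
qed

lemma sim_run:
  assumes wf: "wf_tm (Q, S, \<delta>)" and inv: "minv Q S c"
  shows "tm_run MM t (liftc Q c) = liftc Q (tm_run (Q, S, \<delta>) t c) \<and> minv Q S (tm_run (Q, S, \<delta>) t c)"
proof (induction t)
  case 0 then show ?case using inv by simp
next
  case (Suc t)
  then show ?case using sim_step[OF wf, of "tm_run (Q, S, \<delta>) t c"] by (simp add: run_Suc')
qed

lemma wf_MM:
  assumes wf: "wf_tm (Q, S, \<delta>)"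
  shows "wf_tm MM"
proof -
  have S4: "4 \<le> S" and W: "\<forall>q<Q. \<forall>s<S. fst (\<delta> q s) < Q \<and> fst (snd (\<delta> q s)) < S"
    using wf unfolding wf_tm_def by auto
  have "fst (D q s) < Q + 6 + N \<and> fst (snd (D q s)) < S" if "q < Q + 6 + N" "s < S" for q s
  proof -
    have rlb: "fst (rl Q x) < Q + 6 + N \<and> fst (snd (rl Q x)) < S" if "fst x < Q" "fst (snd x) < S" for x
      using that by (cases x) (auto simp: rl_def)
    have a0: "fst (\<delta> 0 s) < Q" "fst (snd (\<delta> 0 s)) < S" using W Q2 \<open>s < S\<close> by auto
    have aq: "q < Q \<Longrightarrow> fst (\<delta> q s) < Q \<and> fst (snd (\<delta> q s)) < S" using W \<open>s < S\<close> by auto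
    show ?thesis
    proof (cases "q = 0")
      case True then show ?thesis using that S4 by (simp add: cdelta_def)
    next
      case q0: False
      show ?thesis
      proof (cases "q = Q")
        case True then show ?thesis using q0 rlb[OF a0] by (simp add: cdelta_def)
      next
        case qQ: False
        show ?thesis
        proof (cases "q < Q")
          case True
          then have "fst (\<delta> q s) < Q" "fst (snd (\<delta> q s)) < S" using aq by auto
          then show ?thesis using q0 qQ True rlb by (simp add: cdelta_def)
        next
          case False
          then show ?thesis using q0 qQ that S4 N1 by (simp add: cdelta_def)
        qed
      qed
    qed
  qed
  then show ?thesis unfolding wf_tm_def using Q2 S4 by auto
qed

end


lemma time_bound1:
  fixes L N :: nat
  shows "Suc L + L * (2 * (L + N * L) + 2 * N + 4) + (N * L + 1) \<le> (5 * N + 8) * (L + 1) ^ 2"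
proof -
  define x where "x = L + 1"
  have x1: "1 \<le> x" unfolding x_def by simp
  have Lx: "L \<le> x" unfolding x_def by simp
  have "L * (2 * (L + N * L) + 2 * N + 4) \<le> x * (2 * (x + N * x) + 2 * N + 4)"
    using Lx by (intro mult_mono add_mono) auto
  moreover have "N * L + 1 \<le> N * x + 1" using Lx by simp
  moreover have "Suc L = x" unfolding x_def by simp
  ultimately have "Suc L + L * (2 * (L + N * L) + 2 * N + 4) + (N * L + 1) \<le> x + x * (2 * (x + N * x) + 2 * N + 4) + (N * x + 1)"
    by linarith
  also have "\<dots> \<le> (5 * N + 8) * x ^ 2"
  proof -
    have h1: "x \<le> x * x" using x1 by simp
    have h2: "N * x \<le> N * (x * x)" using h1 by simp
    have h3: "1 \<le> x * x" using x1 by (simp add: one_le_mult_iff)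
    have "x + x * (2 * (x + N * x) + 2 * N + 4) + (N * x + 1) = 2 * (x * x) + 2 * (N * (x * x)) + 3 * (N * x) + 5 * x + 1"
      by (simp add: algebra_simps)
    also have "\<dots> \<le> 2 * (x * x) + 2 * (N * (x * x)) + 3 * (N * (x * x)) + 5 * (x * x) + (x * x)"
      using h1 h2 h3 by linarith
    also have "\<dots> = (5 * N + 8) * x ^ 2" by (simp add: algebra_simps power2_eq_square)
    finally show ?thesis .
  qed
  finally show ?thesis unfolding x_def .
qed

lemma time_bound:
  fixes L N c k :: nat
  assumes "tp \<le> Suc L + L * (2 * (L + N * L) + 2 * N + 4) + (N * L + 1)"
    and "tM \<le> c * (Suc (N * L) + 1) ^ k"
  shows "tp + tM \<le> (5 * N + 8 + c * (N + 2) ^ k) * (L + 1) ^ (k + 2)"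
proof -
  define x where "x = L + 1"
  have x1: "1 \<le> x" unfolding x_def by simp
  have a: "tp \<le> (5 * N + 8) * x ^ 2" using assms(1) time_bound1[of L N] unfolding x_def by linarith
  have "(5 * N + 8) * x ^ 2 \<le> (5 * N + 8) * x ^ (k + 2)"
    using x1 by (intro mult_left_mono power_increasing) auto
  with a have a': "tp \<le> (5 * N + 8) * x ^ (k + 2)" by linarith
  have "Suc (N * L) + 1 \<le> (N + 2) * x" unfolding x_def by (simp add: algebra_simps)
  then have "(Suc (N * L) + 1) ^ k \<le> ((N + 2) * x) ^ k" by (rule power_mono) simp
  also have "\<dots> = (N + 2) ^ k * x ^ k" by (rule power_mult_distrib)
  also have "\<dots> \<le> (N + 2) ^ k * x ^ (k + 2)" using x1 by (intro mult_left_mono power_increasing) auto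
  finally have "c * (Suc (N * L) + 1) ^ k \<le> c * ((N + 2) ^ k * x ^ (k + 2))" by (rule mult_left_mono) simp
  with assms(2) have "tM \<le> c * ((N + 2) ^ k * x ^ (k + 2))" by (rule order_trans)
  then have b: "tM \<le> c * (N + 2) ^ k * x ^ (k + 2)" by (simp only: mult.assoc)
  have "tp + tM \<le> (5 * N + 8) * x ^ (k + 2) + c * (N + 2) ^ k * x ^ (k + 2)" using a' b by linarith
  also have "\<dots> = (5 * N + 8 + c * (N + 2) ^ k) * x ^ (k + 2)" by (simp add: algebra_simps)
  finally show ?thesis unfolding x_def .
qed

lemma ti_bound: "ti n i < 4"
proof (cases "0 \<le> i \<and> i < int (length (nat_word n))")
  case True
  then have "nat i < length (nat_word n)" by (simp add: nat_less_iff)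
  then have "nat_word n ! nat i = 1 \<or> nat_word n ! nat i = 2" by (rule nat_word_sym)
  then show ?thesis unfolding ti_def using True by auto
next
  case False
  then show ?thesis unfolding ti_def by auto
qed

theorem comp_ptime:
  assumes pf: "poly_time_computable f" and N1: "1 \<le> N"
  shows "poly_time_computable (\<lambda>m. f (2 ^ (N * input_size m)))"
proof -
  obtain M c k where wf: "wf_tm M" and run: "\<forall>n. \<exists>t. t \<le> c * (input_size n + 1) ^ k \<and> tm_computes_in M f n t"
    using pf unfolding poly_time_computable_def by blast
  obtain Q S \<delta> where M: "M = (Q, S, \<delta>)" by (cases M)
  have Q2: "2 \<le> Q" and S4: "4 \<le> S" using wf M by (auto simp: wf_tm_def)
  let ?M' = "(Q + 6 + N, S, cdelta N Q \<delta>)"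
  have wf': "wf_tm ?M'" using wf_MM[OF Q2 N1] wf M by simp
  have "\<forall>m. \<exists>t. t \<le> (5 * N + 8 + c * (N + 2) ^ k) * (input_size m + 1) ^ (k + 2) \<and>
           tm_computes_in ?M' (\<lambda>m. f (2 ^ (N * input_size m))) m t"
  proof
    fix m
    define L where "L = input_size m"
    define K where "K = (2::nat) ^ (N * L)"
    define d where "d = - int (N * L) - 1"
    obtain tp where tp: "tp \<le> Suc L + L * (2 * (L + N * L) + 2 * N + 4) + (N * L + 1)"
      "tm_run ?M' tp (tm_init m) = (Q, \<lambda>i. ti K (i + int (N * L) + 1), - int (N * L) - 1)"
      using pre_phase[OF Q2 N1, of m S \<delta>] unfolding L_def K_def by blast
    obtain tM where tM: "tM \<le> c * (input_size K + 1) ^ k" "tm_computes_in M f K tM"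
      using run by blast
    have isK: "input_size K = Suc (N * L)" unfolding K_def by (rule input_size_pow2)
    have init: "tm_init K = (0, ti K, 0)" unfolding tm_init_def ti_def by simp
    have cfg: "(Q, \<lambda>i. ti K (i + int (N * L) + 1), - int (N * L) - 1) = liftc Q (shiftc d (tm_init K))"
      unfolding init shiftc_def liftc_def d_def by (simp add: algebra_simps)
    have inv: "minv Q S (shiftc d (tm_init K))"
      unfolding init shiftc_def minv_def using Q2 S4 ti_bound[of K] by (auto intro: less_le_trans)
    obtain q tpe h where res: "tm_run M tM (tm_init K) = (q, tpe, h)" by (cases "tm_run M tM (tm_init K)")
    have q1: "q = 1" and ow: "out_word tpe h = int_word (f K)"
      using tM(2) res unfolding tm_computes_in_def by auto
    have "tm_run ?M' (tp + tM) (tm_init m) = tm_run ?M' tM (liftc Q (shiftc d (tm_init K)))"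
      using tp(2) cfg by (simp add: run_add)
    also have "\<dots> = liftc Q (tm_run (Q, S, \<delta>) tM (shiftc d (tm_init K)))"
      using sim_run[OF Q2 N1, of S \<delta>, OF wf[unfolded M] inv] by blast
    also have "\<dots> = liftc Q (shiftc d (q, tpe, h))"
      using res M by (simp add: shift_run)
    also have "\<dots> = (1, \<lambda>i. tpe (i - d), h + d)"
      unfolding liftc_def shiftc_def using q1 by simp
    finally have fin: "tm_run ?M' (tp + tM) (tm_init m) = (1, \<lambda>i. tpe (i - d), h + d)" .
    have "tm_computes_in ?M' (\<lambda>m. f (2 ^ (N * input_size m))) m (tp + tM)"
      unfolding tm_computes_in_def fin using ow out_shift[of tpe d h] unfolding K_def L_def by simp
    moreover have "tp + tM \<le> (5 * N + 8 + c * (N + 2) ^ k) * (input_size m + 1) ^ (k + 2)"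
      using time_bound[OF tp(1), of tM c k] tM(1) isK unfolding L_def by simp
    ultimately show "\<exists>t. t \<le> (5 * N + 8 + c * (N + 2) ^ k) * (input_size m + 1) ^ (k + 2) \<and>
           tm_computes_in ?M' (\<lambda>m. f (2 ^ (N * input_size m))) m t" by blast
  qed
  then show ?thesis unfolding poly_time_computable_def using wf' by blast
qed


lemma ptime_id: "poly_time_computable (\<lambda>n. int n)"
proof -
  let ?M = "(2::nat, 4::nat, \<lambda>(q::nat) (s::nat). (1::nat, s, Nm))"
  have wf: "wf_tm ?M" unfolding wf_tm_def by simp
  have "tm_computes_in ?M (\<lambda>n. int n) n 1" for n
  proof -
    have init: "tm_init n = (0, ti n, 0)" unfolding tm_init_def ti_def by simp
    have r: "tm_run ?M 1 (tm_init n) = (1, ti n, 0)"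
      unfolding init by (simp add: run_Suc tm_step_def fun_upd_idem)
    have nz: "ti n (int k) \<noteq> 0" if "k < length (nat_word n)" for k
      using that nat_word_sym[of k n] unfolding ti_def by auto
    have z: "ti n (int (length (nat_word n))) = 0" unfolding ti_def by simp
    have least: "(LEAST k. ti n (0 + int k) = 0) = length (nat_word n)"
    proof (rule Least_equality)
      show "ti n (0 + int (length (nat_word n))) = 0" using z by simp
      show "length (nat_word n) \<le> y" if "ti n (0 + int y) = 0" for y
        using that nz by (metis add_0 not_le_imp_less)
    qed
    have "out_word (ti n) 0 = map (\<lambda>i. ti n (0 + int i)) [0..<length (nat_word n)]"
      unfolding out_word_def least ..
    also have "\<dots> = nat_word n"
      by (rule nth_equalityI) (auto simp: ti_def)
    finally have "out_word (ti n) 0 = int_word (int n)" unfolding int_word_def by simp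
    then show ?thesis unfolding tm_computes_in_def r by simp
  qed
  then show ?thesis unfolding poly_time_computable_def
    using wf by (intro exI[of _ ?M] exI[of _ 1] exI[of _ 0]) auto
qed

lemma approx_poly_coeff:
  "coeff (approx_poly n fs gs k) j =
     (if j = n then 1 else if j < n then (of_int (fs j k) + of_int (gs j k) * \<i>) / of_nat k else 0)"
  unfolding approx_poly_def by (auto simp: coeff_sum coeff_monom)

lemma approx_poly_md: "lead_coeff (approx_poly n fs gs k) = 1 \<and> degree (approx_poly n fs gs k) = n"
proof -
  have "degree (approx_poly n fs gs k) \<le> n"
    by (rule degree_le) (auto simp: approx_poly_coeff)
  moreover have "n \<le> degree (approx_poly n fs gs k)"
    by (rule le_degree) (simp add: approx_poly_coeff)
  ultimately have "degree (approx_poly n fs gs k) = n" by simp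
  then show ?thesis by (simp add: approx_poly_coeff)
qed

theorem lemma5:
  fixes p :: "complex poly" and fs gs :: "nat \<Rightarrow> nat \<Rightarrow> int"
  assumes monic: "lead_coeff p = 1"
    and coeffs: "\<forall>j<degree p. coeff p j \<in> CP"
    and defs: "\<forall>j<degree p. defining_functions (coeff p j) (fs j) (gs j)"
  shows "\<exists>K :: nat \<Rightarrow> nat.
           poly_time_computable (\<lambda>m. int (K m)) \<and>
           (\<forall>j<degree p. poly_time_computable (\<lambda>m. fs j (K m)) \<and>
                         poly_time_computable (\<lambda>m. gs j (K m))) \<and>
           (\<forall>m\<ge>1. K m > 1 \<and>
              (\<exists>rs rs'. length rs = degree p \<and> length rs' = degree p \<and>
                 p = roots_poly rs \<and> approx_poly (degree p) fs gs (K m) = roots_poly rs' \<and>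
                 (\<forall>i<degree p. cmod (rs ! i - rs' ! i) \<le> 1 / real m)))"
proof -
  define n where "n = degree p"
  obtain rs0 where rs0: "length rs0 = n" "p = roots_poly rs0" using complex_factor[OF monic] n_def by blast
  obtain c E where c0: "c > 0" and AR: "\<forall>g \<eta>. lead_coeff g = 1 \<longrightarrow> degree g = length rs0 \<longrightarrow> 0 < \<eta> \<longrightarrow> \<eta> \<le> 1 \<longrightarrow>
     (\<forall>j<length rs0. cmod (coeff g j - coeff (roots_poly rs0) j) \<le> c * \<eta> ^ E) \<longrightarrow>
     (\<exists>rs1 rs'. length rs1 = length rs0 \<and> length rs' = length rs0 \<and> roots_poly rs1 = roots_poly rs0 \<and>
        g = roots_poly rs' \<and> (\<forall>i<length rs0. cmod (rs1 ! i - rs' ! i) \<le> \<eta>))"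
    using approx_roots[of rs0] by blast
  obtain N0 where N0: "1 / c < 2 ^ N0" using real_arch_pow[of 2 "1 / c"] by auto
  define N where "N = E + N0 + 1"
  have N1: "1 \<le> N" unfolding N_def by simp
  define K where "K = (\<lambda>m. (2::nat) ^ (N * input_size m))"
  have K_gt: "K m > 1" for m
  proof -
    have "1 * 1 \<le> N * input_size m" using N1 input_size_ge1[of m] by (rule mult_le_mono)
    then have "(2::nat) ^ 1 \<le> 2 ^ (N * input_size m)" by (intro power_increasing) auto
    then show ?thesis unfolding K_def by simp
  qed
  have K_big: "1 / real (K m) \<le> c * (1 / real m) ^ E" if m1: "m \<ge> 1" for m
  proof -
    define L where "L = input_size m"
    have L1: "L \<ge> 1" unfolding L_def by (rule input_size_ge1)
    have mL: "real m \<le> 2 ^ L" using less_pow_input_size[of m] unfolding L_def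
      by (metis less_imp_le of_nat_le_iff of_nat_numeral of_nat_power)
    have A: "real m ^ E \<le> (2 ^ L) ^ E" using mL by (intro power_mono) auto
    have B: "1 / c \<le> (2::real) ^ (N0 * L)"
    proof -
      have "(2::real) ^ N0 \<le> 2 ^ (N0 * L)" using L1 by (intro power_increasing) auto
      then show ?thesis using N0 by linarith
    qed
    have e: "N * L = L * E + N0 * L + L" unfolding N_def by (simp add: algebra_simps)
    have "real (K m) = (2::real) ^ (N * L)" unfolding K_def L_def by simp
    also have "\<dots> = 2 ^ (L * E) * 2 ^ (N0 * L) * 2 ^ L" unfolding e by (simp only: power_add)
    also have "\<dots> = (2 ^ L) ^ E * 2 ^ (N0 * L) * 2 ^ L" by (simp only: power_mult)
    finally have "real (K m) = (2 ^ L) ^ E * 2 ^ (N0 * L) * 2 ^ L" .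
    moreover have "(2 ^ L) ^ E * 2 ^ (N0 * L) * 1 \<le> (2 ^ L) ^ E * 2 ^ (N0 * L) * (2::real) ^ L"
      by (intro mult_left_mono) auto
    ultimately have "real (K m) \<ge> (2 ^ L) ^ E * 2 ^ (N0 * L)" by simp
    moreover have "(2 ^ L) ^ E * 2 ^ (N0 * L) \<ge> real m ^ E * (1 / c)"
      using A B c0 by (intro mult_mono) auto
    ultimately have KK: "real (K m) \<ge> real m ^ E / c" by simp
    have mpos: "real m ^ E / c > 0" using m1 c0 by simp
    have "1 / real (K m) \<le> 1 / (real m ^ E / c)"
      using KK mpos by (intro frac_le) auto
    also have "\<dots> = c * (1 / real m) ^ E" by (simp add: power_one_over)
    finally show ?thesis .
  qed
  show ?thesis
  proof (rule exI[of _ K], intro conjI allI impI)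
    show "poly_time_computable (\<lambda>m. int (K m))"
      unfolding K_def using comp_ptime[OF ptime_id N1] by simp
    fix j assume j: "j < degree p"
    have df: "defining_functions (coeff p j) (fs j) (gs j)" using defs j by blast
    show "poly_time_computable (\<lambda>m. fs j (K m))"
      unfolding K_def using comp_ptime[OF _ N1] df unfolding defining_functions_def by blast
    show "poly_time_computable (\<lambda>m. gs j (K m))"
      unfolding K_def using comp_ptime[OF _ N1] df unfolding defining_functions_def by blast
  next
    fix m :: nat assume m1: "1 \<le> m"
    show "K m > 1" by (rule K_gt)
    let ?g = "approx_poly (degree p) fs gs (K m)"
    have gmd0: "lead_coeff ?g = 1 \<and> degree ?g = degree p" by (rule approx_poly_md)
    then have gmd: "lead_coeff ?g = 1" "degree ?g = length rs0" using rs0(1) n_def by (blast, simp)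
    have close: "\<forall>j<length rs0. cmod (coeff ?g j - coeff (roots_poly rs0) j) \<le> c * (1 / real m) ^ E"
    proof (intro allI impI)
      fix j assume j: "j < length rs0"
      then have jp: "j < degree p" using rs0 n_def by simp
      have df: "\<forall>k>1. cmod (coeff p j - (of_int (fs j k) + of_int (gs j k) * \<i>) / of_nat k) \<le> 1 / real k"
        using defs jp unfolding defining_functions_def by blast
      have "cmod (coeff ?g j - coeff p j) = cmod (coeff p j - (of_int (fs j (K m)) + of_int (gs j (K m)) * \<i>) / of_nat (K m))"
        using jp by (simp add: approx_poly_coeff norm_minus_commute)
      also have "\<dots> \<le> 1 / real (K m)" using df K_gt by blast
      also have "\<dots> \<le> c * (1 / real m) ^ E" using K_big m1 by blast
      finally show "cmod (coeff ?g j - coeff (roots_poly rs0) j) \<le> c * (1 / real m) ^ E" using rs0 by simp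
    qed
    have "0 < 1 / real m" "1 / real m \<le> 1" using m1 by auto
    then obtain rs1 rs' where R: "length rs1 = length rs0" "length rs' = length rs0" "roots_poly rs1 = roots_poly rs0"
        "?g = roots_poly rs'" "\<forall>i<length rs0. cmod (rs1 ! i - rs' ! i) \<le> 1 / real m"
      using AR gmd close by blast
    show "\<exists>rs rs'. length rs = degree p \<and> length rs' = degree p \<and>
                 p = roots_poly rs \<and> ?g = roots_poly rs' \<and>
                 (\<forall>i<degree p. cmod (rs ! i - rs' ! i) \<le> 1 / real m)"
      using R rs0 n_def by (intro exI[of _ rs1] exI[of _ rs']) auto
  qed
qed

end
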